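(* Let $S$ and $A$ be finite-dimensional quantum systems with $d_A=\dim A$, let $\rho^A$ be a density matrix on $A$, $U^{SA}$ a unitary on $S\otimes A$, and define the CPTP map $\Phi(X):=\operatorname{Tr}_A[U^{SA}(X\otimes\rho^A)(U^{SA})^\dagger]$ on operators of $S$. Let $\Phi^\dagger$ be the trace-dual of $\Phi$. Then for every density matrix $\sigma$ on $S$, $\operatorname{Tr}[\Phi^\dagger(\sigma)]\le d_A$.
   Context: The trace-dual $\Phi^\dagger$ is the linear map satisfying $\operatorname{Tr}[\Phi(X)Y]=\operatorname{Tr}[X\Phi^\dagger(Y)]$ for all operators $X,Y$. *)

theory Defs
  imports "Jordan_Normal_Form.Matrix"
begin

definition adj :: "complex mat \<Rightarrow> complex mat" where
  "adj M = mat (dim_col M) (dim_row M) (\<lambda>(i,j). cnj (M $$ (j,i)))"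

definition tr :: "complex mat \<Rightarrow> complex" where
  "tr M = (\<Sum>i<dim_row M. M $$ (i,i))"

(* Positive semidefinite n x n matrix (order on complex: 0 \<le> z iff z real and nonnegative) *)
definition psd :: "nat \<Rightarrow> complex mat \<Rightarrow> bool" where
  "psd n M \<longleftrightarrow> M \<in> carrier_mat n n \<and> adj M = M \<and>
     (\<forall>v \<in> carrier_vec n. 0 \<le> conjugate v \<bullet> (M *\<^sub>v v))"

definition density :: "nat \<Rightarrow> complex mat \<Rightarrow> bool" where
  "density n M \<longleftrightarrow> psd n M \<and> tr M = 1"

definition unitary :: "nat \<Rightarrow> complex mat \<Rightarrow> bool" where
  "unitary n U \<longleftrightarrow> U \<in> carrier_mat n n \<and> adj U * U = 1\<^sub>m n \<and> U * adj U = 1\<^sub>m n"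

(* Tensor (Kronecker) product X \<otimes> R for X on S (dim dS) and R on A (dim dA);
   basis |s> \<otimes> |a> of S \<otimes> A has index s * dA + a *)
definition kron :: "nat \<Rightarrow> nat \<Rightarrow> complex mat \<Rightarrow> complex mat \<Rightarrow> complex mat" where
  "kron dS dA X R = mat (dS * dA) (dS * dA)
     (\<lambda>(i,j). X $$ (i div dA, j div dA) * R $$ (i mod dA, j mod dA))"

definition ptrace_A :: "nat \<Rightarrow> nat \<Rightarrow> complex mat \<Rightarrow> complex mat" where
  "ptrace_A dS dA M = mat dS dS (\<lambda>(s,t). \<Sum>a<dA. M $$ (s * dA + a, t * dA + a))"

definition Phi :: "nat \<Rightarrow> nat \<Rightarrow> complex mat \<Rightarrow> complex mat \<Rightarrow> complex mat \<Rightarrow> complex mat" where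
  "Phi dS dA U \<rho> X = ptrace_A dS dA (U * kron dS dA X \<rho> * adj U)"

end

theory Submission
  imports Defs
begin

lemma sum_split_mult:
  fixes f :: "nat \<Rightarrow> 'a::comm_monoid_add"
  shows "(\<Sum>i<m*d. f i) = (\<Sum>s<m. \<Sum>a<d. f (s*d+a))"
proof (induction m)
  case 0 then show ?case by simp
next
  case (Suc m)
  have "(\<Sum>i<Suc m*d. f i) = (\<Sum>i<m*d. f i) + (\<Sum>i\<in>{m*d..<m*d+d}. f i)"
    by (simp add: add.commute lessThan_atLeast0 sum.atLeastLessThan_concat)
  also have "(\<Sum>i\<in>{m*d..<m*d+d}. f i) = (\<Sum>a<d. f (m*d+a))"
    by (simp add: lessThan_atLeast0 sum.shift_bounds_nat_ivl[of f 0 "m*d" d, simplified] add.commute)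
  finally show ?case using Suc by simp
qed

lemma qf_sum:
  fixes M :: "complex mat"
  assumes "M \<in> carrier_mat n n" "v \<in> carrier_vec n"
  shows "conjugate v \<bullet> (M *\<^sub>v v) = (\<Sum>k<n. \<Sum>l<n. cnj (v$k) * M$$(k,l) * v$l)"
  using assms by (simp add: scalar_prod_def mult_mat_vec_def row_def sum_distrib_left mult.assoc lessThan_atLeast0)

lemma sum_delta_l:
  fixes g :: "nat \<Rightarrow> 'a::semiring_0"
  assumes "i < n" shows "(\<Sum>k<n. (if k = i then x else 0) * g k) = x * g i"
proof -
  have "(\<Sum>k<n. (if k = i then x else 0) * g k) = (\<Sum>k<n. if k = i then x * g k else 0)"
    by (rule sum.cong) auto
  also have "\<dots> = x * g i" using assms by (simp add: sum.delta)
  finally show ?thesis .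
qed

lemma sum_delta_r:
  fixes g :: "nat \<Rightarrow> 'a::semiring_0"
  assumes "i < n" shows "(\<Sum>k<n. g k * (if k = i then x else 0)) = g i * x"
proof -
  have "(\<Sum>k<n. g k * (if k = i then x else 0)) = (\<Sum>k<n. if k = i then g k * x else 0)"
    by (rule sum.cong) auto
  also have "\<dots> = g i * x" using assms by (simp add: sum.delta)
  finally show ?thesis .
qed

lemma qf2:
  fixes M :: "complex mat"
  assumes M: "M \<in> carrier_mat n n" and ij: "i < n" "j < n"
  shows "conjugate (vec n (\<lambda>k. (if k = i then x else 0) + (if k = j then y else 0))) \<bullet>
     (M *\<^sub>v (vec n (\<lambda>k. (if k = i then x else 0) + (if k = j then y else 0))))
   = cnj x * x * M$$(i,i) + cnj x * y * M$$(i,j) + cnj y * x * M$$(j,i) + cnj y * y * M$$(j,j)"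
proof -
  define a where "a = (\<lambda>k::nat. if k = i then x else 0)"
  define b where "b = (\<lambda>k::nat. if k = j then y else 0)"
  have ca: "cnj (a k) = (if k = i then cnj x else 0)" for k unfolding a_def by auto
  have cb: "cnj (b k) = (if k = j then cnj y else 0)" for k unfolding b_def by auto
  have "conjugate (vec n (\<lambda>k. a k + b k)) \<bullet> (M *\<^sub>v vec n (\<lambda>k. a k + b k))
     = (\<Sum>k<n. \<Sum>l<n. cnj (a k + b k) * M$$(k,l) * (a l + b l))"
    by (subst qf_sum[OF M]) auto
  also have "\<dots> = (\<Sum>k<n. cnj (a k) * (\<Sum>l<n. M$$(k,l) * a l)) + (\<Sum>k<n. cnj (a k) * (\<Sum>l<n. M$$(k,l) * b l))
     + (\<Sum>k<n. cnj (b k) * (\<Sum>l<n. M$$(k,l) * a l)) + (\<Sum>k<n. cnj (b k) * (\<Sum>l<n. M$$(k,l) * b l))"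
    by (simp add: sum.distrib sum_distrib_left algebra_simps)
  also have "\<dots> = cnj x * x * M$$(i,i) + cnj x * y * M$$(i,j) + cnj y * x * M$$(j,i) + cnj y * y * M$$(j,j)"
    unfolding ca cb using ij by (simp add: sum_delta_l a_def b_def sum_delta_r mult.assoc)
  finally show ?thesis unfolding a_def b_def .
qed

lemma psd_herm:
  assumes "psd n M" "i < n" "j < n"
  shows "M $$ (j,i) = cnj (M $$ (i,j))"
proof -
  have M: "M \<in> carrier_mat n n" and h: "adj M = M" using assms unfolding psd_def by auto
  have "adj M $$ (j,i) = cnj (M $$ (i,j))" unfolding adj_def using M assms by simp
  then show ?thesis using h by simp
qed

lemma psd_qf:
  assumes "psd n M" "i < n" "j < n"
  shows "0 \<le> cnj x * x * M$$(i,i) + cnj x * y * M$$(i,j) + cnj y * x * M$$(j,i) + cnj y * y * M$$(j,j)"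
proof -
  have M: "M \<in> carrier_mat n n" using assms unfolding psd_def by simp
  show ?thesis
  using assms(1) unfolding psd_def qf2[OF M assms(2,3), symmetric] by auto
qed

lemma psd_diag:
  assumes "psd n M" "i < n"
  shows "0 \<le> M$$(i,i)"
  using psd_qf[OF assms assms(2), of 1 0] by simp

lemma psd_diag_real:
  assumes "psd n M" "i < n"
  shows "M$$(i,i) = of_real (Re (M$$(i,i)))" "Re (M$$(i,i)) \<ge> 0"
  using psd_diag[OF assms] by (auto simp: less_eq_complex_def complex_eq_iff)

lemma psd_minor:
  assumes "psd n M" "i < n" "j < n"
  shows "(cmod (M$$(i,j)))^2 \<le> Re (M$$(i,i)) * Re (M$$(j,j))"
proof -
  define m where "m = M$$(i,j)"
  define a where "a = Re (M$$(i,i))"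
  define c where "c = Re (M$$(j,j))"
  have ji: "M$$(j,i) = cnj m" using psd_herm[OF assms] m_def by simp
  have ii: "M$$(i,i) = of_real a" and jj: "M$$(j,j) = of_real c" and a0: "a \<ge> 0" and c0: "c \<ge> 0"
    using psd_diag_real[OF assms(1,2)] psd_diag_real[OF assms(1,3)] a_def c_def by auto
  have nm: "(cmod m)^2 = Re m * Re m + Im m * Im m" by (subst cmod_power2) (simp add: power2_eq_square)
  have q: "0 \<le> Re (cnj x * x * M$$(i,i) + cnj x * y * M$$(i,j) + cnj y * x * M$$(j,i) + cnj y * y * M$$(j,j))" for x y
    using psd_qf[OF assms, of x y] by (simp add: less_eq_complex_def)
  have 1: "0 \<le> a * (a * c - (cmod m)^2)"
    using q[of "-m" "of_real a"] unfolding ii jj ji m_def[symmetric] nm by (simp add: algebra_simps)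
  have 2: "0 \<le> c * (a * c - (cmod m)^2)"
    using q[of "of_real c" "-cnj m"] unfolding ii jj ji m_def[symmetric] nm by (simp add: algebra_simps)
  have 3: "0 \<le> a * (cmod m)^2 - 2 * (cmod m)^2 + c"
    using q[of "-m" 1] unfolding ii jj ji m_def[symmetric] nm by (simp add: algebra_simps)
  have "(cmod m)^2 \<le> a * c"
  proof (cases "a > 0")
    case True then show ?thesis using 1 by (simp add: zero_le_mult_iff)
  next
    case False
    then have a: "a = 0" using a0 by simp
    show ?thesis
    proof (cases "c > 0")
      case True then show ?thesis using 2 by (simp add: zero_le_mult_iff)
    next
      case False then have "c = 0" using c0 by simp
      then show ?thesis using 3 a by simp
    qed
  qed
  then show ?thesis using a_def c_def m_def by simp
qed

lemma amgm4:
  fixes X Y p q u v :: real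
  assumes "X \<ge> 0" "Y \<ge> 0" "p \<ge> 0" "q \<ge> 0" "u \<ge> 0" "v \<ge> 0"
    "X^2 \<le> p * q" "Y^2 \<le> u * v"
  shows "X * Y \<le> (p * v + q * u) / 2"
proof -
  have "X^2 * Y^2 \<le> (p*q)*(u*v)"
    by (rule mult_mono) (use assms in auto)
  also have "\<dots> = (p*v)*(q*u)" by simp
  also have "\<dots> \<le> ((p * v + q * u) / 2)^2"
    using sum_squares_ge_zero[of "p*v - q*u" 0] by (simp add: power2_eq_square field_simps)
  finally have "(X*Y)^2 \<le> ((p * v + q * u) / 2)^2" by (simp add: power_mult_distrib)
  then show ?thesis by (rule power2_le_imp_le) (use assms in simp)
qed

lemma block_ineq:
  fixes A B :: "nat \<Rightarrow> nat \<Rightarrow> complex"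
  assumes hA: "\<And>a b. a < d \<Longrightarrow> b < d \<Longrightarrow> A b a = cnj (A a b)"
    and hB: "\<And>a b. a < d \<Longrightarrow> b < d \<Longrightarrow> B b a = cnj (B a b)"
    and dA: "\<And>a. a < d \<Longrightarrow> Re (A a a) \<ge> 0"
    and dB: "\<And>a. a < d \<Longrightarrow> Re (B a a) \<ge> 0"
    and mA: "\<And>a b. a < d \<Longrightarrow> b < d \<Longrightarrow> (cmod (A a b))^2 \<le> Re (A a a) * Re (A b b)"
    and mB: "\<And>a b. a < d \<Longrightarrow> b < d \<Longrightarrow> (cmod (B a b))^2 \<le> Re (B a a) * Re (B b b)"
    and tA: "(\<Sum>a<d. Re (A a a)) = 1"
  shows "Im (\<Sum>a<d. \<Sum>b<d. A a b * B b a) = 0"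
    and "Re (\<Sum>a<d. \<Sum>b<d. A a b * B b a) \<le> (\<Sum>b<d. Re (B b b))"
proof -
  let ?T = "\<Sum>a<d. \<Sum>b<d. A a b * B b a"
  have hA': "cnj (A a b) = A b a" if "a < d" "b < d" for a b using hA[OF that] by simp
  have hB': "cnj (B b a) = B a b" if "a < d" "b < d" for a b using hB[OF that(2,1)] by simp
  have "cnj ?T = (\<Sum>a<d. \<Sum>b<d. cnj (A a b) * cnj (B b a))"
    by (simp add: cnj_sum)
  also have "\<dots> = (\<Sum>a<d. \<Sum>b<d. A b a * B a b)"
    by (intro sum.cong refl) (simp add: hA' hB')
  also have "\<dots> = ?T" by (subst sum.swap) (simp add: mult.commute)
  finally have "cnj ?T = ?T" .
  then have "Im (cnj ?T) = Im ?T" by simp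
  then show "Im ?T = 0" by (simp only: cnj.sel)
  have "Re ?T = (\<Sum>a<d. \<Sum>b<d. Re (A a b * B b a))" by (simp add: Re_sum)
  also have "\<dots> \<le> (\<Sum>a<d. \<Sum>b<d. (Re (A a a) * Re (B b b) + Re (A b b) * Re (B a a)) / 2)"
  proof (intro sum_mono)
    fix a b assume a: "a \<in> {..<d}" and b: "b \<in> {..<d}"
    have "Re (A a b * B b a) \<le> cmod (A a b * B b a)" by (rule complex_Re_le_cmod)
    also have "\<dots> = cmod (A a b) * cmod (B b a)" by (simp add: norm_mult)
    also have "\<dots> \<le> (Re (A a a) * Re (B b b) + Re (A b b) * Re (B a a)) / 2"
      using a b mB[of b a] by (intro amgm4) (auto simp: dA dB mA mult.commute)
    finally show "Re (A a b * B b a) \<le> (Re (A a a) * Re (B b b) + Re (A b b) * Re (B a a)) / 2" .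
  qed
  also have "\<dots> = ((\<Sum>a<d. \<Sum>b<d. Re (A a a) * Re (B b b)) + (\<Sum>a<d. \<Sum>b<d. Re (A b b) * Re (B a a))) / 2"
    by (simp only: sum.distrib add_divide_distrib sum_divide_distrib)
  also have "(\<Sum>a<d. \<Sum>b<d. Re (A b b) * Re (B a a)) = (\<Sum>a<d. \<Sum>b<d. Re (A a a) * Re (B b b))"
    by (subst sum.swap) simp
  also have "(\<Sum>a<d. \<Sum>b<d. Re (A a a) * Re (B b b)) = (\<Sum>a<d. Re (A a a)) * (\<Sum>b<d. Re (B b b))"
    by (simp add: sum_product)
  finally show "Re ?T \<le> (\<Sum>b<d. Re (B b b))" using tA by simp
qed

lemma tr_mult:
  assumes "A \<in> carrier_mat nr nc" "B \<in> carrier_mat nc nr"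
  shows "tr (A * B) = (\<Sum>i<nr. \<Sum>j<nc. A$$(i,j) * B$$(j,i))"
  using assms unfolding tr_def
  by (simp add: scalar_prod_def row_def col_def lessThan_atLeast0)

lemma tr_comm:
  assumes "A \<in> carrier_mat nr nc" "B \<in> carrier_mat nc nr"
  shows "tr (A * B) = tr (B * A)"
  unfolding tr_mult[OF assms] tr_mult[OF assms(2,1)]
  by (subst sum.swap) (simp add: mult.commute)

lemma adj_dims[simp]: "dim_row (adj A) = dim_col A" "dim_col (adj A) = dim_row A"
  unfolding adj_def by simp_all

lemma adj_carrier[simp]: "A \<in> carrier_mat n m \<Longrightarrow> adj A \<in> carrier_mat m n"
  unfolding adj_def by simp

lemma adj_index[simp]: "A \<in> carrier_mat n m \<Longrightarrow> i < m \<Longrightarrow> j < n \<Longrightarrow> adj A $$ (i,j) = cnj (A $$ (j,i))"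
  unfolding adj_def by simp

lemma adj_adj: "A \<in> carrier_mat n m \<Longrightarrow> adj (adj A) = A"
  by (intro eq_matI) (auto simp: adj_def)

lemma adj_mult:
  assumes "A \<in> carrier_mat n m" "B \<in> carrier_mat m k"
  shows "adj (A * B) = adj B * adj A"
proof (intro eq_matI)
  fix i j assume ij: "i < dim_row (adj B * adj A)" "j < dim_col (adj B * adj A)"
  then have i: "i < k" and j: "j < n" using assms by auto
  have "adj (A*B) $$ (i,j) = cnj ((A*B) $$ (j,i))" using assms i j by (simp add: adj_def)
  also have "\<dots> = (\<Sum>l<m. cnj (A$$(j,l)) * cnj (B$$(l,i)))"
    using assms i j by (simp add: scalar_prod_def row_def col_def lessThan_atLeast0)
  also have "\<dots> = (adj B * adj A) $$ (i,j)"
    using assms i j by (simp add: scalar_prod_def row_def col_def lessThan_atLeast0 mult.commute)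
  finally show "adj (A * B) $$ (i, j) = (adj B * adj A) $$ (i, j)" .
qed (use assms in auto)

lemma adj_mult_vec:
  fixes A :: "complex mat"
  assumes "A \<in> carrier_mat n m" "v \<in> carrier_vec m" "z \<in> carrier_vec n"
  shows "conjugate v \<bullet> (adj A *\<^sub>v z) = conjugate (A *\<^sub>v v) \<bullet> z"
proof -
  have "conjugate v \<bullet> (adj A *\<^sub>v z) = (\<Sum>k<m. cnj (v$k) * (\<Sum>l<n. cnj (A$$(l,k)) * z$l))"
    using assms by (simp add: scalar_prod_def mult_mat_vec_def row_def lessThan_atLeast0)
  also have "\<dots> = (\<Sum>l<n. (\<Sum>k<m. cnj (A$$(l,k)) * cnj (v$k)) * z$l)"
    by (simp add: sum_distrib_left sum_distrib_right mult_ac) (rule sum.swap)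
  also have "\<dots> = conjugate (A *\<^sub>v v) \<bullet> z"
    using assms by (simp add: scalar_prod_def mult_mat_vec_def row_def lessThan_atLeast0)
  finally show ?thesis .
qed

lemma divmod_helper:
  fixes s a d :: nat
  assumes "a < d"
  shows "(s*d+a) div d = s" "(s*d+a) mod d = a"
  using assms by auto

lemma kron_carrier[simp]: "kron dS dA X R \<in> carrier_mat (dS*dA) (dS*dA)"
  unfolding kron_def by simp

lemma idx_lt: fixes s a :: nat assumes "s < dS" "a < dA" shows "s*dA+a < dS*dA"
proof -
  have "s*dA+a < s*dA + dA" using assms by simp
  also have "\<dots> = Suc s * dA" by simp
  also have "\<dots> \<le> dS*dA" using assms by (intro mult_le_mono1) simp
  finally show ?thesis .
qed

lemma kron_index2:
  assumes "s < dS" "a < dA" "t < dS" "b < dA"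
  shows "kron dS dA X R $$ (s*dA+a, t*dA+b) = X$$(s, t) * R$$(a, b)"
  using assms idx_lt[OF assms(1,2)] idx_lt[OF assms(3,4)] unfolding kron_def by simp

lemma kron_psd:
  assumes s: "psd dS \<sigma>" and dA: "dA > 0"
  shows "psd (dS*dA) (kron dS dA \<sigma> (1\<^sub>m dA))"
proof -
  let ?S = "kron dS dA \<sigma> (1\<^sub>m dA)"
  have hS: "adj ?S = ?S"
  proof (intro eq_matI)
    fix i j assume "i < dim_row ?S" "j < dim_col ?S"
    then have i: "i < dS*dA" and j: "j < dS*dA" unfolding kron_def by auto
    have id: "i div dA < dS" "j div dA < dS" "i mod dA < dA" "j mod dA < dA"
      using i j dA by (auto simp: less_mult_imp_div_less)
    show "adj ?S $$ (i,j) = ?S $$ (i,j)"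
      using i j id psd_herm[OF s, of "i div dA" "j div dA"] unfolding kron_def
      by (auto simp: adj_def)
  qed (auto simp: kron_def)
  have q: "0 \<le> conjugate v \<bullet> (?S *\<^sub>v v)" if v: "v \<in> carrier_vec (dS*dA)" for v
  proof -
    define w where "w a = vec dS (\<lambda>s. v $ (s*dA+a))" for a
    have "conjugate v \<bullet> (?S *\<^sub>v v) = (\<Sum>i<dS*dA. \<Sum>j<dS*dA. cnj (v$i) * ?S$$(i,j) * v$j)"
      by (rule qf_sum[OF kron_carrier v])
    also have "\<dots> = (\<Sum>s<dS. \<Sum>a<dA. \<Sum>t<dS. \<Sum>b<dA. cnj (v$(s*dA+a)) * ?S$$(s*dA+a,t*dA+b) * v$(t*dA+b))"
      by (simp add: sum_split_mult)
    also have "\<dots> = (\<Sum>s<dS. \<Sum>a<dA. \<Sum>t<dS. cnj (v$(s*dA+a)) * \<sigma>$$(s,t) * v$(t*dA+a))"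
    proof (intro sum.cong refl)
      fix s a t assume st: "s \<in> {..<dS}" "a \<in> {..<dA}" "t \<in> {..<dS}"
      have "(\<Sum>b<dA. cnj (v$(s*dA+a)) * ?S$$(s*dA+a,t*dA+b) * v$(t*dA+b))
          = (\<Sum>b<dA. (if b = a then cnj (v$(s*dA+a)) * \<sigma>$$(s,t) * v$(t*dA+b) else 0))"
        using st by (intro sum.cong refl) (auto simp: kron_index2)
      also have "\<dots> = cnj (v$(s*dA+a)) * \<sigma>$$(s,t) * v$(t*dA+a)" using st by (simp add: sum.delta')
      finally show "(\<Sum>b<dA. cnj (v$(s*dA+a)) * ?S$$(s*dA+a,t*dA+b) * v$(t*dA+b))
          = cnj (v$(s*dA+a)) * \<sigma>$$(s,t) * v$(t*dA+a)" .
    qed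
    also have "\<dots> = (\<Sum>a<dA. \<Sum>s<dS. \<Sum>t<dS. cnj (w a $ s) * \<sigma>$$(s,t) * (w a $ t))"
      by (subst sum.swap) (simp add: w_def)
    also have "\<dots> = (\<Sum>a<dA. conjugate (w a) \<bullet> (\<sigma> *\<^sub>v w a))"
      using s unfolding psd_def by (subst qf_sum) (auto simp: w_def)
    also have "0 \<le> \<dots>"
      using s unfolding psd_def by (intro sum_nonneg) (auto simp: w_def)
    finally show ?thesis by simp
  qed
  show ?thesis unfolding psd_def using hS q by auto
qed

lemma conj_psd:
  assumes S: "psd n S" and U: "U \<in> carrier_mat n m"
  shows "psd m (adj U * S * U)"
proof -
  have Sc: "S \<in> carrier_mat n n" and hS: "adj S = S" using S unfolding psd_def by auto
  have c: "adj U * S * U \<in> carrier_mat m m" using U Sc by auto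
  have US: "adj U * S \<in> carrier_mat m n" using U Sc by auto
  have "adj (adj U * S * U) = adj U * adj (adj U * S)"
    by (rule adj_mult[OF US U])
  also have "adj (adj U * S) = adj S * adj (adj U)"
    by (rule adj_mult[OF adj_carrier[OF U] Sc])
  also have "\<dots> = S * U" using hS adj_adj[OF U] by simp
  also have "adj U * (S * U) = adj U * S * U" using U Sc by (simp add: assoc_mult_mat[of _ m n])
  finally have h: "adj (adj U * S * U) = adj U * S * U" .
  have q: "0 \<le> conjugate v \<bullet> ((adj U * S * U) *\<^sub>v v)" if v: "v \<in> carrier_vec m" for v
  proof -
    have "(adj U * S * U) *\<^sub>v v = (adj U * S) *\<^sub>v (U *\<^sub>v v)"
      by (rule assoc_mult_mat_vec[OF US U v])
    also have "\<dots> = adj U *\<^sub>v (S *\<^sub>v (U *\<^sub>v v))"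
      by (rule assoc_mult_mat_vec[OF adj_carrier[OF U] Sc]) (use U v in auto)
    finally have "(adj U * S * U) *\<^sub>v v = adj U *\<^sub>v (S *\<^sub>v (U *\<^sub>v v))" .
    then have "conjugate v \<bullet> ((adj U * S * U) *\<^sub>v v) = conjugate (U *\<^sub>v v) \<bullet> (S *\<^sub>v (U *\<^sub>v v))"
      using U Sc v by (simp add: adj_mult_vec)
    also have "0 \<le> \<dots>" using S U v unfolding psd_def by auto
    finally show ?thesis by simp
  qed
  show ?thesis unfolding psd_def using c h q by auto
qed

theorem mainTheorem6:
  fixes dS dA :: nat and \<rho> U \<sigma> :: "complex mat"
    and PhiDual :: "complex mat \<Rightarrow> complex mat"
  assumes "dS > 0" and "dA > 0"
    and "density dA \<rho>"
    and "unitary (dS * dA) U"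
    and "\<forall>X \<in> carrier_mat dS dS. \<forall>Y \<in> carrier_mat dS dS.
           PhiDual Y \<in> carrier_mat dS dS \<and>
           tr (Phi dS dA U \<rho> X * Y) = tr (X * PhiDual Y)"
    and "density dS \<sigma>"
  shows "tr (PhiDual \<sigma>) \<le> of_nat dA"
proof -
  note dA = assms(2)
  define n where "n = dS * dA"
  have rho: "psd dA \<rho>" "tr \<rho> = 1" using assms(3) unfolding density_def by auto
  have sig: "psd dS \<sigma>" "tr \<sigma> = 1" using assms(6) unfolding density_def by auto
  have Uc: "U \<in> carrier_mat n n" and UU: "U * adj U = 1\<^sub>m n"
    using assms(4) unfolding unitary_def n_def by auto
  have sc: "\<sigma> \<in> carrier_mat dS dS" using sig unfolding psd_def by auto
  have rc: "\<rho> \<in> carrier_mat dA dA" using rho unfolding psd_def by auto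
  have Y: "PhiDual \<sigma> \<in> carrier_mat dS dS"
     "tr (Phi dS dA U \<rho> (1\<^sub>m dS) * \<sigma>) = tr (1\<^sub>m dS * PhiDual \<sigma>)"
    using assms(5) sc by auto
  have e1: "tr (PhiDual \<sigma>) = tr (Phi dS dA U \<rho> (1\<^sub>m dS) * \<sigma>)"
    using Y by simp
  define K where "K = kron dS dA (1\<^sub>m dS) \<rho>"
  define S where "S = kron dS dA \<sigma> (1\<^sub>m dA)"
  define M where "M = U * K * adj U"
  define W where "W = adj U * S * U"
  have Kc: "K \<in> carrier_mat n n" and Sc: "S \<in> carrier_mat n n"
    unfolding K_def S_def n_def by auto
  have Mc: "M \<in> carrier_mat n n" unfolding M_def using Uc Kc by auto
  have Wc: "W \<in> carrier_mat n n" unfolding W_def using Uc Sc by auto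
  have Phi1: "Phi dS dA U \<rho> (1\<^sub>m dS) = mat dS dS (\<lambda>(s,t). \<Sum>a<dA. M $$ (s * dA + a, t * dA + a))"
    unfolding Phi_def ptrace_A_def M_def K_def ..
  have e2: "tr (Phi dS dA U \<rho> (1\<^sub>m dS) * \<sigma>) = tr (M * S)"
  proof -
    have "tr (Phi dS dA U \<rho> (1\<^sub>m dS) * \<sigma>) = (\<Sum>s<dS. \<Sum>t<dS. (\<Sum>a<dA. M $$ (s * dA + a, t * dA + a)) * \<sigma>$$(t,s))"
      unfolding Phi1 by (subst tr_mult[OF _ sc]) auto
    also have "\<dots> = (\<Sum>s<dS. \<Sum>a<dA. \<Sum>t<dS. M $$ (s * dA + a, t * dA + a) * \<sigma>$$(t,s))"
      by (simp add: sum_distrib_right) (subst sum.swap, rule refl)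
    also have "\<dots> = (\<Sum>s<dS. \<Sum>a<dA. \<Sum>t<dS. \<Sum>b<dA. M $$ (s*dA+a, t*dA+b) * S$$(t*dA+b, s*dA+a))"
    proof (intro sum.cong refl)
      fix s a t assume st: "s \<in> {..<dS}" "a \<in> {..<dA}" "t \<in> {..<dS}"
      have "(\<Sum>b<dA. M $$ (s*dA+a, t*dA+b) * S$$(t*dA+b, s*dA+a))
          = (\<Sum>b<dA. if b = a then M $$ (s*dA+a, t*dA+b) * \<sigma>$$(t,s) else 0)"
        using st by (intro sum.cong refl) (auto simp: S_def kron_index2)
      also have "\<dots> = M $$ (s * dA + a, t * dA + a) * \<sigma>$$(t,s)" using st by (simp add: sum.delta')
      finally show "M $$ (s * dA + a, t * dA + a) * \<sigma>$$(t,s) = (\<Sum>b<dA. M $$ (s*dA+a, t*dA+b) * S$$(t*dA+b, s*dA+a))" by simp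
    qed
    also have "\<dots> = tr (M * S)"
      unfolding tr_mult[OF Mc Sc] n_def by (simp add: sum_split_mult)
    finally show ?thesis .
  qed
  have e3: "tr (M * S) = tr (K * W)"
  proof -
    have UK: "U * K \<in> carrier_mat n n" using Uc Kc by auto
    have US: "adj U * S \<in> carrier_mat n n" using Uc Sc by auto
    have "M * S = (U * K) * (adj U * S)" unfolding M_def
      by (rule assoc_mult_mat[OF UK adj_carrier[OF Uc] Sc])
    then have "tr (M * S) = tr ((adj U * S) * (U * K))" using tr_comm[OF UK US] by simp
    also have "(adj U * S) * (U * K) = W * K" unfolding W_def
      by (rule assoc_mult_mat[OF US Uc Kc, symmetric])
    also have "tr (W * K) = tr (K * W)" by (rule tr_comm[OF Wc Kc])
    finally show ?thesis .
  qed
  have e4: "tr (K * W) = (\<Sum>s<dS. \<Sum>a<dA. \<Sum>b<dA. \<rho>$$(a,b) * W$$(s*dA+b, s*dA+a))"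
  proof -
    have "tr (K * W) = (\<Sum>s<dS. \<Sum>a<dA. \<Sum>t<dS. \<Sum>b<dA. K $$ (s*dA+a, t*dA+b) * W$$(t*dA+b, s*dA+a))"
      unfolding tr_mult[OF Kc Wc] n_def by (simp add: sum_split_mult)
    also have "\<dots> = (\<Sum>s<dS. \<Sum>a<dA. \<Sum>t<dS. if t = s then (\<Sum>b<dA. \<rho>$$(a,b) * W$$(s*dA+b, s*dA+a)) else 0)"
      by (intro sum.cong refl) (auto simp: K_def kron_index2)
    also have "\<dots> = (\<Sum>s<dS. \<Sum>a<dA. \<Sum>b<dA. \<rho>$$(a,b) * W$$(s*dA+b, s*dA+a))"
      by (simp add: sum.delta')
    finally show ?thesis .
  qed
  have Wpsd: "psd n W" unfolding W_def S_def n_def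
    using conj_psd[OF kron_psd[OF sig(1) dA]] Uc n_def by auto
  define T where "T s = (\<Sum>a<dA. \<Sum>b<dA. \<rho>$$(a,b) * W$$(s*dA+b, s*dA+a))" for s
  have tA: "(\<Sum>a<dA. Re (\<rho>$$(a,a))) = 1"
    using rho(2) unfolding tr_def using rc by (simp add: Re_sum[symmetric])
  have blk: "Im (T s) = 0 \<and> Re (T s) \<le> (\<Sum>b<dA. Re (W$$(s*dA+b, s*dA+b)))" if s: "s < dS" for s
  proof -
    have ix: "s*dA+a < n" if "a < dA" for a using idx_lt[OF s that] n_def by simp
    define B where "B = (\<lambda>a b. W$$(s*dA+a, s*dA+b))"
    have hA: "\<And>a b. a < dA \<Longrightarrow> b < dA \<Longrightarrow> \<rho>$$(b,a) = cnj (\<rho>$$(a,b))"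
      by (rule psd_herm[OF rho(1)])
    have hB: "\<And>a b. a < dA \<Longrightarrow> b < dA \<Longrightarrow> B b a = cnj (B a b)"
      unfolding B_def by (rule psd_herm[OF Wpsd]) (simp_all add: ix)
    have dA': "\<And>a. a < dA \<Longrightarrow> Re (\<rho>$$(a,a)) \<ge> 0"
      by (rule psd_diag_real(2)[OF rho(1)])
    have dB: "\<And>a. a < dA \<Longrightarrow> Re (B a a) \<ge> 0"
      unfolding B_def by (rule psd_diag_real(2)[OF Wpsd]) (simp add: ix)
    have mA: "\<And>a b. a < dA \<Longrightarrow> b < dA \<Longrightarrow> (cmod (\<rho>$$(a,b)))^2 \<le> Re (\<rho>$$(a,a)) * Re (\<rho>$$(b,b))"
      by (rule psd_minor[OF rho(1)])
    have mB: "\<And>a b. a < dA \<Longrightarrow> b < dA \<Longrightarrow> (cmod (B a b))^2 \<le> Re (B a a) * Re (B b b)"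
      unfolding B_def by (rule psd_minor[OF Wpsd]) (simp_all add: ix)
    note bi = block_ineq[of dA "\<lambda>a b. \<rho>$$(a,b)" B, OF hA hB dA' dB mA mB tA]
    have "T s = (\<Sum>a<dA. \<Sum>b<dA. \<rho>$$(a,b) * B b a)" unfolding T_def B_def ..
    with bi have "Im (T s) = 0 \<and> Re (T s) \<le> (\<Sum>b<dA. Re (B b b))" by simp
    then show ?thesis unfolding B_def by simp
  qed
  have e5: "tr W = of_nat dA"
  proof -
    have US: "adj U * S \<in> carrier_mat n n" using Uc Sc by auto
    have "tr W = tr (U * (adj U * S))" unfolding W_def by (rule tr_comm[OF US Uc])
    also have "U * (adj U * S) = (U * adj U) * S" by (rule assoc_mult_mat[OF Uc adj_carrier[OF Uc] Sc, symmetric])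
    also have "\<dots> = S" using UU Sc by simp
    also have "tr S = (\<Sum>s<dS. \<Sum>a<dA. S $$ (s*dA+a, s*dA+a))"
      unfolding tr_def using Sc n_def by (simp add: sum_split_mult)
    also have "\<dots> = (\<Sum>s<dS. \<Sum>a<dA. \<sigma> $$ (s,s))"
      by (intro sum.cong refl) (auto simp: S_def kron_index2)
    also have "\<dots> = of_nat dA * tr \<sigma>" unfolding tr_def using sc by (simp add: sum_distrib_left mult.commute)
    finally show ?thesis using sig(2) by simp
  qed
  have ReW: "Re (tr W) = (\<Sum>s<dS. \<Sum>b<dA. Re (W$$(s*dA+b, s*dA+b)))"
    unfolding tr_def using Wc n_def by (simp add: sum_split_mult Re_sum)
  have tot: "tr (PhiDual \<sigma>) = (\<Sum>s<dS. T s)" unfolding e1 e2 e3 e4 T_def ..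
  have "Im (\<Sum>s<dS. T s) = 0" using blk by (simp add: Im_sum)
  moreover have "Re (\<Sum>s<dS. T s) \<le> Re (tr W)" unfolding ReW Re_sum
    using blk by (intro sum_mono) auto
  ultimately show ?thesis unfolding tot e5 by (simp add: less_eq_complex_def)
qed

end
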